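(* Let $\alpha\in(0,1)$, $\eta\ge0$, $\gamma>0$, $a>0$, $b\in\mathbb R\setminus\{0\}$, and assume $b^2\neq\frac{(k_1^2-ak_2^2)(ak_1^2-k_2^2)}{(a+1)(k_1^2+k_2^2)}\pi^2$ for all $k_1,k_2\in\mathbb Z$ with $(k_1,k_2)\neq(0,0)$. Then for every $\lambda\in\mathbb R$, $\ker(i\lambda I-\mathcal A)=\{0\}$.
   Context: Let $\mu(\xi)=|\xi|^{\frac{2\alpha-1}{2}}$ and $\kappa(\alpha)=\frac{\sin(\alpha\pi)}{\pi}$. Let $H^1_L(0,1)=\{u\in H^1(0,1):u(0)=0\}$. $\mathcal H=H^1_L(0,1)\times L^2(0,1)\times H^1_0(0,1)\times L^2(0,1)\times L^2(\mathbb R)$ with inner product $\langle(u,v,y,z,\omega),(\tilde u,\tilde v,\tilde y,\tilde z,\tilde\omega)\rangle_{\mathcal H}=\int_0^1(v\bar{\tilde v}+u_x\bar{\tilde u}_x+z\bar{\tilde z}+a y_x\bar{\tilde y}_x)dx+\gamma\kappa(\alpha)\int_{\mathbb R}\omega\bar{\tilde\omega}\,d\xi$. $D(\mathcal A)$ is the set of $(u,v,y,z,\omega)\in\mathcal H$ with $u\in H^2(0,1)\cap H^1_L(0,1)$, $y\in H^2(0,1)\cap H^1_0(0,1)$, $v\in H^1_L(0,1)$, $z\in H^1_0(0,1)$, $-(\xi^2+\eta)\omega+v(1)\mu(\xi)\in L^2(\mathbb R)$, $|\xi|\omega\in L^2(\mathbb R)$, $u_x(1)+\gamma\kappa(\alpha)\int_{\mathbb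 R}\mu(\xi)\omega(\xi)d\xi=0$, and $\mathcal A(u,v,y,z,\omega)=(v,\,u_{xx}-bz,\,z,\,ay_{xx}+bv,\,-(\xi^2+\eta)\omega+v(1)\mu(\xi))$. *)

theory Defs
  imports "HOL-Analysis.Analysis"
begin

definition L2_on :: "real set \<Rightarrow> (real \<Rightarrow> complex) \<Rightarrow> bool" where
  "L2_on S f \<longleftrightarrow> f \<in> borel_measurable (lebesgue_on S) \<and>
     integrable (lebesgue_on S) (\<lambda>x. (cmod (f x))^2)"

text \<open>u (the continuous representative of an element of H^1(0,1)) has the
  L^2(0,1) weak derivative g: u(x) = u(0) + int_0^x g for all x in [0,1].\<close>
definition weak_deriv01 :: "(real \<Rightarrow> complex) \<Rightarrow> (real \<Rightarrow> complex) \<Rightarrow> bool" where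
  "weak_deriv01 u g \<longleftrightarrow> L2_on {0..1} g \<and> (\<forall>x\<in>{0..1}. u x = u 0 + integral {0..x} g)"

definition mu :: "real \<Rightarrow> real \<Rightarrow> real" where
  "mu \<alpha> \<xi> = \<bar>\<xi>\<bar> powr ((2*\<alpha> - 1)/2)"

definition kappa :: "real \<Rightarrow> real" where
  "kappa \<alpha> = sin (\<alpha> * pi) / pi"

definition in_DA :: "real \<Rightarrow> real \<Rightarrow> real \<Rightarrow>
   (real \<Rightarrow> complex) \<Rightarrow> (real \<Rightarrow> complex) \<Rightarrow> (real \<Rightarrow> complex) \<Rightarrow>
   (real \<Rightarrow> complex) \<Rightarrow> (real \<Rightarrow> complex) \<Rightarrow> (real \<Rightarrow> complex) \<Rightarrow>
   (real \<Rightarrow> complex) \<Rightarrow> (real \<Rightarrow> complex) \<Rightarrow> (real \<Rightarrow> complex) \<Rightarrow>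
   (real \<Rightarrow> complex) \<Rightarrow> (real \<Rightarrow> complex) \<Rightarrow> bool" where
  "in_DA \<alpha> \<eta> \<gamma> u ux uxx v vx y yx yxx z zx \<omega> \<longleftrightarrow>
     weak_deriv01 u ux \<and> weak_deriv01 ux uxx \<and> u 0 = 0 \<and>
     weak_deriv01 y yx \<and> weak_deriv01 yx yxx \<and> y 0 = 0 \<and> y 1 = 0 \<and>
     weak_deriv01 v vx \<and> v 0 = 0 \<and>
     weak_deriv01 z zx \<and> z 0 = 0 \<and> z 1 = 0 \<and>
     L2_on UNIV \<omega> \<and>
     L2_on UNIV (\<lambda>\<xi>. - complex_of_real (\<xi>^2 + \<eta>) * \<omega> \<xi> + v 1 * complex_of_real (mu \<alpha> \<xi>)) \<and>
     L2_on UNIV (\<lambda>\<xi>. complex_of_real \<bar>\<xi>\<bar> * \<omega> \<xi>) \<and>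
     ux 1 + complex_of_real (\<gamma> * kappa \<alpha>) *
        integral\<^sup>L lebesgue (\<lambda>\<xi>. complex_of_real (mu \<alpha> \<xi>) * \<omega> \<xi>) = 0"

end

theory Submission
  imports Defs
begin


lemma negl_AE:
  assumes "AE x in lebesgue. x \<in> {0<..<1::real} \<longrightarrow> P x"
  shows "negligible {x. x \<in> {0<..<1::real} \<and> \<not> P x}"
proof -
  from assms obtain N where N: "{x \<in> space lebesgue. \<not> (x \<in> {0<..<1::real} \<longrightarrow> P x)} \<subseteq> N"
     "emeasure lebesgue N = 0" "N \<in> sets lebesgue" by (erule AE_E)
  then have "negligible N" by (simp add: negligible_iff_null_sets null_sets_def)
  then show ?thesis by (rule negligible_subset) (use N(1) in auto)
qed

lemma L2_int_on:
  assumes "L2_on {0..1} (g::real\<Rightarrow>complex)"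
  shows "g integrable_on {0..1}"
proof -
  have m: "g \<in> borel_measurable (lebesgue_on {0..1})" and i: "integrable (lebesgue_on {0..1}) (\<lambda>x. (cmod (g x))^2)"
    using assms by (auto simp: L2_on_def)
  have "integrable (lebesgue_on {0..1}) (\<lambda>x. 1 + (cmod (g x))^2)"
    using i by simp
  then have "integrable (lebesgue_on {0..1}) g"
  proof (rule Bochner_Integration.integrable_bound)
    show "AE x in lebesgue_on {0..1}. norm (g x) \<le> norm (1 + (cmod (g x))\<^sup>2)"
    proof (rule AE_I2)
      fix x
      have "0 \<le> (cmod (g x) - 1)^2" by simp
      then have "cmod (g x) \<le> 1 + (cmod (g x))\<^sup>2"
        by (simp add: power2_eq_square algebra_simps) (smt (verit) norm_ge_zero)
      then show "norm (g x) \<le> norm (1 + (cmod (g x))\<^sup>2)" by simp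
    qed
  qed (use m in auto)
  then show ?thesis by (rule integrable_on_lebesgue_on) auto
qed

lemma wd_cont:
  assumes "weak_deriv01 f g"
  shows "continuous_on {0..1} f"
proof -
  have "g integrable_on {0..1}" using assms L2_int_on unfolding weak_deriv01_def by blast
  then have c: "continuous_on {0..1} (\<lambda>x. integral {0..x} g)"
    by (rule indefinite_integral_continuous_1)
  have "continuous_on {0..1} (\<lambda>x. f 0 + integral {0..x} g)"
    by (rule continuous_on_add[OF continuous_on_const c])
  moreover have "\<forall>x\<in>{0..1}. f 0 + integral {0..x} g = f x"
    using assms unfolding weak_deriv01_def by (metis (no_types, lifting))
  ultimately show ?thesis
    using continuous_on_eq by blast
qed

lemma wd_deriv:
  assumes "weak_deriv01 f g" "continuous_on {0..1} h"
    "AE x in lebesgue. x \<in> {0<..<1::real} \<longrightarrow> g x = h x" "x \<in> {0..1}"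
  shows "(f has_vector_derivative h x) (at x within {0..1})"
proof -
  have neg: "negligible ({x. x \<in> {0<..<1::real} \<and> \<not> g x = h x} \<union> {0,1})"
    using negl_AE[OF assms(3)] by (simp add: negligible_insert)
  have eq: "f t = f 0 + integral {0..t} h" if "t \<in> {0..1}" for t
  proof -
    have "integral {0..t} g = integral {0..t} h"
      by (rule integral_spike[OF neg]) (use that in auto)
    moreover have "f t = f 0 + integral {0..t} g" using assms(1) that unfolding weak_deriv01_def by blast
    ultimately show ?thesis by simp
  qed
  have "((\<lambda>t. f 0 + integral {0..t} h) has_vector_derivative h x) (at x within {0..1})"
    using integral_has_vector_derivative[OF assms(2) assms(4)]
    by (auto intro!: derivative_eq_intros)
  then show ?thesis
    apply (rule has_vector_derivative_transform[where f="\<lambda>t. f 0 + integral {0..t} h", rotated 2])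
     apply (rule assms(4))
    apply (erule eq)
    done
qed

lemma ae_cont_eq:
  fixes f :: "real \<Rightarrow> complex"
  assumes "continuous_on {0..1} f" "AE x in lebesgue. x \<in> {0<..<1::real} \<longrightarrow> f x = 0" "x \<in> {0..1}"
  shows "f x = 0"
proof -
  have neg: "negligible ({x. x \<in> {0<..<1::real} \<and> \<not> f x = 0} \<union> {0,1})"
    using negl_AE[OF assms(2)] by (simp add: negligible_insert)
  have eq: "integral {0..t} f = 0" if "t \<in> {0..1}" for t
  proof -
    have "integral {0..t} f = integral {0..t} (\<lambda>_. 0::complex)"
      by (rule integral_spike[OF neg]) (use that in auto)
    then show ?thesis by simp
  qed
  have d1: "((\<lambda>t. integral {0..t} f) has_vector_derivative f x) (at x within {0..1})"
    using integral_has_vector_derivative[OF assms(1) assms(3)] .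
  have d2: "((\<lambda>t. integral {0..t} f) has_vector_derivative 0) (at x within {0..1})"
    by (rule has_vector_derivative_transform[of _ _ _ "\<lambda>_. 0"]) (use assms(3) eq in auto)
  show ?thesis
    using vector_derivative_unique_within_closed_interval[of 0 1 x, OF _ _ d1[unfolded cbox_interval[symmetric]] d2[unfolded cbox_interval[symmetric]]] assms(3)
    by auto
qed



lemma vd_eq: "(f has_vector_derivative a) F \<Longrightarrow> a = b \<Longrightarrow> (f has_vector_derivative b) F"
  by simp

lemma const01:
  assumes "\<And>x. x \<in> {0..1::real} \<Longrightarrow> (f has_vector_derivative (0::complex)) (at x within {0..1})"
    "x \<in> {0..1}"
  shows "f x = f 0"
proof -
  obtain c where "\<And>x. x \<in> {0..1::real} \<Longrightarrow> f x = c"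
    using has_vector_derivative_zero_constant[of "{0..1::real}" f] assms(1) by auto
  then show ?thesis using assms(2) by force
qed

lemma ode_sol:
  fixes p p' C S :: "real \<Rightarrow> complex" and m :: complex
  assumes dp: "\<And>x. x\<in>{0..1} \<Longrightarrow> (p has_vector_derivative p' x) (at x within {0..1})"
    and dp': "\<And>x. x\<in>{0..1} \<Longrightarrow> (p' has_vector_derivative (- m * p x)) (at x within {0..1})"
    and dS: "\<And>x. x\<in>{0..1} \<Longrightarrow> (S has_vector_derivative C x) (at x within {0..1})"
    and dC: "\<And>x. x\<in>{0..1} \<Longrightarrow> (C has_vector_derivative (- m * S x)) (at x within {0..1})"
    and S0: "S 0 = 0" and C0: "C 0 = 1" and p0: "p 0 = 0"
    and x: "x \<in> {0..1}"
  shows "p x = p' 0 * S x \<and> p' x = p' 0 * C x"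
proof -
  have e1: "p' x * S x - p x * C x = 0"
  proof -
    have "p' x * S x - p x * C x = p' 0 * S 0 - p 0 * C 0"
    proof (rule const01[OF _ x, of "\<lambda>x. p' x * S x - p x * C x"])
      fix t :: real assume t: "t \<in> {0..1}"
      show "((\<lambda>x. p' x * S x - p x * C x) has_vector_derivative 0) (at t within {0..1})"
        by (rule vd_eq, rule has_vector_derivative_diff[OF has_vector_derivative_mult[OF dp'[OF t] dS[OF t]]
              has_vector_derivative_mult[OF dp[OF t] dC[OF t]]]) (simp add: algebra_simps)
    qed
    then show ?thesis using S0 p0 by simp
  qed
  have e2: "C x * C x + m * (S x * S x) = 1"
  proof -
    have "C x * C x + m * (S x * S x) = C 0 * C 0 + m * (S 0 * S 0)"
    proof (rule const01[OF _ x, of "\<lambda>x. C x * C x + m * (S x * S x)"])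
      fix t :: real assume t: "t \<in> {0..1}"
      show "((\<lambda>x. C x * C x + m * (S x * S x)) has_vector_derivative 0) (at t within {0..1})"
        by (rule vd_eq, rule has_vector_derivative_add[OF has_vector_derivative_mult[OF dC[OF t] dC[OF t]]
              has_vector_derivative_mult_right[OF has_vector_derivative_mult[OF dS[OF t] dS[OF t]]]]) (simp add: algebra_simps)
    qed
    then show ?thesis using S0 C0 by simp
  qed
  have e3: "p' x * C x + m * (p x * S x) = p' 0"
  proof -
    have "p' x * C x + m * (p x * S x) = p' 0 * C 0 + m * (p 0 * S 0)"
    proof (rule const01[OF _ x, of "\<lambda>x. p' x * C x + m * (p x * S x)"])
      fix t :: real assume t: "t \<in> {0..1}"
      show "((\<lambda>x. p' x * C x + m * (p x * S x)) has_vector_derivative 0) (at t within {0..1})"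
        by (rule vd_eq, rule has_vector_derivative_add[OF has_vector_derivative_mult[OF dp'[OF t] dC[OF t]]
              has_vector_derivative_mult_right[OF has_vector_derivative_mult[OF dp[OF t] dS[OF t]]]]) (simp add: algebra_simps)
    qed
    then show ?thesis using S0 C0 by simp
  qed
  have "p' 0 * S x - p x = S x * (p' x * C x + m * (p x * S x)) - p x * (C x * C x + m * (S x * S x))"
    using e2 e3 by simp
  also have "\<dots> = C x * (p' x * S x - p x * C x)" by (simp add: algebra_simps)
  finally have r1: "p x = p' 0 * S x" using e1 by simp
  have "p' 0 * C x - p' x = C x * (p' x * C x + m * (p x * S x)) - p' x * (C x * C x + m * (S x * S x))"
    using e2 e3 by simp
  also have "\<dots> = - m * S x * (p' x * S x - p x * C x)" by (simp add: algebra_simps)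
  finally have r2: "p' x = p' 0 * C x" using e1 by simp
  show ?thesis using r1 r2 by simp
qed



lemma CS_exist:
  fixes m :: real
  obtains C S :: "real \<Rightarrow> complex" where
    "\<And>x. (S has_vector_derivative C x) (at x within {0..1})"
    "\<And>x. (C has_vector_derivative (- of_real m * S x)) (at x within {0..1})"
    "S 0 = 0" "C 0 = 1" "S 1 = 0 \<Longrightarrow> \<exists>n::int. n \<noteq> 0 \<and> m = (real_of_int n * pi)^2"
proof (cases "m = 0")
  case True
  show ?thesis
  proof (rule that[of "\<lambda>x. complex_of_real x" "\<lambda>_. 1"])
    fix x :: real
    show "((\<lambda>x. complex_of_real x) has_vector_derivative 1) (at x within {0..1})"
      using has_vector_derivative_of_real[OF DERIV_ident[where F="at x within {0..1}"]] by simp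
    show "((\<lambda>_. 1::complex) has_vector_derivative - complex_of_real m * complex_of_real x) (at x within {0..1})"
      using True by (simp add: has_vector_derivative_const)
  qed auto
next
  case False
  define w where "w = csqrt (of_real m)"
  have ww: "w * w = of_real m" unfolding w_def using power2_csqrt[of "of_real m"] by (simp add: power2_eq_square)
  have w0: "w \<noteq> 0" using ww False by auto
  show ?thesis
  proof (rule that[of "\<lambda>x. sin (w * of_real x) / w" "\<lambda>x. cos (w * of_real x)"])
    fix x :: real
    have "((\<lambda>z. sin (w * z) / w) has_field_derivative cos (w * of_real x)) (at (of_real x))"
      by (rule derivative_eq_intros refl | use w0 in simp)+
    then show "((\<lambda>x. sin (w * of_real x) / w) has_vector_derivative cos (w * of_real x)) (at x within {0..1})"
      by (rule has_vector_derivative_real_field)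
    have "((\<lambda>z. cos (w * z)) has_field_derivative - of_real m * (sin (w * of_real x) / w)) (at (of_real x))"
      by (rule derivative_eq_intros refl | use w0 ww in \<open>simp add: field_simps\<close>)+
    then show "((\<lambda>x. cos (w * of_real x)) has_vector_derivative - of_real m * (sin (w * of_real x) / w)) (at x within {0..1})"
      by (rule has_vector_derivative_real_field)
  next
    assume "sin (w * complex_of_real 1) / w = 0"
    then have "sin w = 0" using w0 by simp
    then obtain n :: int where n: "w = of_real (n * pi)" by (auto simp: sin_eq_0)
    then have "n \<noteq> 0" using w0 by auto
    moreover have "of_real m = (of_real ((n * pi)^2) :: complex)" using ww n by (simp add: power2_eq_square)
    ultimately show "\<exists>n::int. n \<noteq> 0 \<and> m = (real_of_int n * pi)^2" using of_real_eq_iff by blast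
  qed auto
qed

lemma degenerate:
  fixes a b l m1 m2 :: real and n1 n2 :: int
  assumes a: "a > 0" and n: "n1 \<noteq> 0" "n2 \<noteq> 0"
    and m1: "m1 = (real_of_int n1 * pi)^2" and m2: "m2 = (real_of_int n2 * pi)^2"
    and s: "a * (m1 + m2) = l^2 * (a + 1)" and p: "a * (m1 * m2) = l^2 * (l^2 - b^2)"
  shows "b^2 = ((real_of_int n1^2 - a * real_of_int n2^2) * (a * real_of_int n1^2 - real_of_int n2^2))
             / ((a + 1) * (real_of_int n1^2 + real_of_int n2^2)) * pi^2"
proof -
  define P1 where "P1 = real_of_int n1 ^ 2"
  define P2 where "P2 = real_of_int n2 ^ 2"
  define q where "q = pi^2"
  have k: "P1 > 0" "P2 > 0" using n by (auto simp: P1_def P2_def)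
  have S: "P1 + P2 \<noteq> 0" using k by simp
  have q: "q > 0" by (simp add: q_def)
  have a1: "a + 1 \<noteq> 0" using a by simp
  have m1': "m1 = q * P1" and m2': "m2 = q * P2" unfolding m1 m2 P1_def P2_def q_def by (simp_all add: power_mult_distrib)
  have L: "l^2 = a * q * (P1 + P2) / (a + 1)"
    using s a1 unfolding m1' m2' by (simp add: field_simps)
  have Lpos: "l^2 \<noteq> 0" using L a k q a1 by simp
  have "b^2 = l^2 - a * m1 * m2 / l^2" using p Lpos by (simp add: field_simps)
  also have "\<dots> = ((P1 - a * P2) * (a * P1 - P2)) / ((a + 1) * (P1 + P2)) * q"
  proof -
    have a0: "a \<noteq> 0" "q \<noteq> 0" using a q by auto
    have t1: "a*(q*P1)*(q*P2) / (a*q*(P1+P2)/(a+1)) = q*(a+1)*P1*P2/(P1+P2)"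
    proof -
      have "a*q*(P1+P2) \<noteq> 0" using a0 S by simp
      then have "P1 * (a * q) + P2 * (a * q) \<noteq> 0" by (simp add: algebra_simps)
      then show ?thesis using a0 a1 S by (simp add: field_simps)
    qed
    have t2: "a*q*(P1+P2)/(a+1) - q*(a+1)*P1*P2/(P1+P2) = q*(a*(P1+P2)^2 - (a+1)^2*P1*P2)/((a+1)*(P1+P2))"
      using a0 a1 S by (simp add: field_simps power2_eq_square)
    have t3: "a*(P1+P2)^2 - (a+1)^2*P1*P2 = (P1 - a * P2) * (a * P1 - P2)"
      by (simp add: algebra_simps power2_eq_square)
    show ?thesis unfolding L m1' m2' t1 t2 t3 by simp
  qed
  finally show ?thesis unfolding P1_def P2_def q_def .
qed



lemma energy:
  fixes u ux y yx :: "real \<Rightarrow> complex" and a b l :: real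
  assumes du: "\<And>x. x\<in>{0..1} \<Longrightarrow> (u has_vector_derivative ux x) (at x within {0..1})"
    and dux: "\<And>x. x\<in>{0..1} \<Longrightarrow> (ux has_vector_derivative (- ((complex_of_real l)^2) * u x + \<i> * of_real l * of_real b * y x)) (at x within {0..1})"
    and dy: "\<And>x. x\<in>{0..1} \<Longrightarrow> (y has_vector_derivative yx x) (at x within {0..1})"
    and dyx: "\<And>x. x\<in>{0..1} \<Longrightarrow> (yx has_vector_derivative ((- ((complex_of_real l)^2) * y x - \<i> * of_real l * of_real b * u x) / of_real a)) (at x within {0..1})"
    and a: "a \<noteq> 0" and u0: "u 0 = 0" and y0: "y 0 = 0" and y1: "y 1 = 0"
  shows "ux 1 * cnj (u 1) = cnj (ux 1) * u 1"
proof -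
  define G where "G x = ux x * cnj (u x) - cnj (ux x) * u x + of_real a * (yx x * cnj (y x) - cnj (yx x) * y x)" for x
  have "G 1 = G 0"
  proof (rule const01)
    fix t :: real assume t: "t \<in> {0..1}"
    show "(G has_vector_derivative 0) (at t within {0..1})"
      unfolding G_def
      apply (rule vd_eq)
       apply (rule has_vector_derivative_add[OF has_vector_derivative_diff[OF has_vector_derivative_mult[OF dux[OF t] has_vector_derivative_cnj[OF du[OF t]]]
               has_vector_derivative_mult[OF has_vector_derivative_cnj[OF dux[OF t]] du[OF t]]]
               has_vector_derivative_mult_right[OF has_vector_derivative_diff[OF has_vector_derivative_mult[OF dyx[OF t] has_vector_derivative_cnj[OF dy[OF t]]]
               has_vector_derivative_mult[OF has_vector_derivative_cnj[OF dyx[OF t]] dy[OF t]]]]])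
      using a apply (simp add: field_simps power2_eq_square)
      done
  qed simp
  then show ?thesis unfolding G_def using u0 y0 y1 by simp
qed



lemma AE_nonzero: "AE \<xi> in lebesgue. \<xi> \<noteq> (0::real)"
  by (rule AE_completion[OF AE_lborel_singleton])

lemma not_AE_zero: "\<not> (AE \<xi> in lebesgue. \<xi> = (0::real))"
proof
  assume "AE \<xi> in lebesgue. \<xi> = (0::real)"
  then have "AE \<xi> in lebesgue. \<xi> \<in> ({}::real set)" using AE_nonzero by eventually_elim simp
  then obtain N where N: "{x \<in> space lebesgue. \<not> x \<in> ({}::real set)} \<subseteq> N" "emeasure lebesgue N = 0" "N \<in> sets (lebesgue :: real measure)"
    by (erule AE_E)
  then have "negligible N" by (simp add: negligible_iff_null_sets null_sets_def)
  then have "negligible (cbox (0::real) 1)" by (rule negligible_subset) (use N(1) in auto)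
  then show False using negligible_interval(1)[of "0::real" 1] by simp
qed

lemma cpx_id0:
  fixes S L r :: real and V :: complex
  shows "V * (of_real (S * r) - \<i> * of_real (L * r)) * (of_real S + \<i> * of_real L)
         = V * of_real r * ((of_real S - \<i> * of_real L) * (of_real S + \<i> * of_real L))"
  by (simp add: algebra_simps)

lemma cpx_id:
  fixes S L M :: real and V :: complex
  assumes "S^2 + L^2 \<noteq> 0"
  shows "V * (of_real (S * (M^2 / (S^2 + L^2))) - \<i> * of_real (L * (M^2 / (S^2 + L^2)))) * (of_real S + \<i> * of_real L)
         = V * of_real M * of_real M"
proof -
  have e: "(of_real S - \<i> * of_real L) * (of_real S + \<i> * of_real L) = (of_real (S^2 + L^2) :: complex)"
    by (simp add: complex_eq_iff power2_eq_square)
  have "V * (of_real (S * (M^2 / (S^2 + L^2))) - \<i> * of_real (L * (M^2 / (S^2 + L^2)))) * (of_real S + \<i> * of_real L)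
      = V * of_real (M^2 / (S^2 + L^2)) * ((of_real S - \<i> * of_real L) * (of_real S + \<i> * of_real L))"
    by (rule cpx_id0)
  also have "\<dots> = V * of_real (M^2 / (S^2 + L^2) * (S^2 + L^2))" unfolding e by (simp only: of_real_mult mult.assoc)
  also have "\<dots> = V * of_real M * of_real M" using assms by (simp add: power2_eq_square)
  finally show ?thesis .
qed

lemma omega_part:
  fixes \<omega> :: "real \<Rightarrow> complex" and v1 :: complex and l \<eta> \<alpha> :: real
  assumes l: "l \<noteq> 0" and v1: "v1 \<noteq> 0" and eta: "\<eta> \<ge> 0"
    and L1: "L2_on UNIV \<omega>" and L2: "L2_on UNIV (\<lambda>\<xi>. complex_of_real \<bar>\<xi>\<bar> * \<omega> \<xi>)"
    and eq: "AE \<xi> in lebesgue. - complex_of_real (\<xi>^2 + \<eta>) * \<omega> \<xi> + v1 * complex_of_real (mu \<alpha> \<xi>) = \<i> * l * \<omega> \<xi>"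
  shows "\<exists>H K. H > 0 \<and> integral\<^sup>L lebesgue (\<lambda>\<xi>. complex_of_real (mu \<alpha> \<xi>) * \<omega> \<xi>) = v1 * (of_real H - \<i> * of_real K)"
proof -
  define s where "s \<xi> = \<xi>^2 + \<eta>" for \<xi> :: real
  define q where "q \<xi> = (mu \<alpha> \<xi>)^2 / ((s \<xi>)^2 + l^2)" for \<xi>
  have den: "complex_of_real (s \<xi>) + \<i> * l \<noteq> 0" for \<xi>
    using l by (simp add: complex_eq_iff)
  have nd: "(cmod (complex_of_real (s \<xi>) + \<i> * l))^2 = (s \<xi>)^2 + l^2" for \<xi>
    by (simp add: cmod_power2)
  have sl: "(s \<xi>)^2 + l^2 > 0" for \<xi> using l by (simp add: add_nonneg_pos)
  have aew: "AE \<xi> in lebesgue. \<omega> \<xi> = v1 * of_real (mu \<alpha> \<xi>) / (of_real (s \<xi>) + \<i> * l)"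
    using eq
  proof eventually_elim
    case (elim \<xi>)
    then have "\<omega> \<xi> * (of_real (s \<xi>) + \<i> * l) = v1 * of_real (mu \<alpha> \<xi>)"
      by (simp add: s_def algebra_simps)
    then show ?case using den[of \<xi>] by (simp add: eq_divide_eq)
  qed
  have mq: "q \<in> borel_measurable lebesgue"
  proof -
    have "q \<in> borel_measurable lborel" unfolding q_def s_def mu_def by measurable
    then show ?thesis by (rule measurable_completion)
  qed
  have mid[measurable]: "(\<lambda>x::real. x) \<in> borel_measurable lebesgue"
    by (rule measurable_completion) simp
  have mw[measurable]: "\<omega> \<in> borel_measurable lebesgue"
    using L1 by (simp add: L2_on_def lebesgue_on_UNIV_eq)
  have "integrable lebesgue (\<lambda>\<xi>. (cmod (\<omega> \<xi>))^2)"
    using L1 by (simp add: L2_on_def lebesgue_on_UNIV_eq)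
  moreover have "AE \<xi> in lebesgue. (cmod (\<omega> \<xi>))^2 = (cmod v1)^2 * q \<xi>"
    using aew
  proof eventually_elim
    case (elim \<xi>)
    show ?case unfolding elim q_def
      by (simp add: norm_mult norm_divide power_divide power_mult_distrib nd)
  qed
  ultimately have "integrable lebesgue (\<lambda>\<xi>. (cmod v1)^2 * q \<xi>)"
    using integrable_cong_AE[of "\<lambda>\<xi>. (cmod (\<omega> \<xi>))^2" lebesgue "\<lambda>\<xi>. (cmod v1)^2 * q \<xi>"] mw mq
    by simp
  then have iq: "integrable lebesgue q" using v1 by simp
  have "integrable lebesgue (\<lambda>\<xi>. (cmod (complex_of_real \<bar>\<xi>\<bar> * \<omega> \<xi>))^2)"
    using L2 by (simp add: L2_on_def lebesgue_on_UNIV_eq)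
  moreover have "AE \<xi> in lebesgue. (cmod (complex_of_real \<bar>\<xi>\<bar> * \<omega> \<xi>))^2 = (cmod v1)^2 * (\<xi>^2 * q \<xi>)"
    using aew
  proof eventually_elim
    case (elim \<xi>)
    show ?case unfolding elim q_def
      by (simp add: norm_mult norm_divide power_divide power_mult_distrib nd)
  qed
  moreover have "(\<lambda>\<xi>. (cmod (complex_of_real \<bar>\<xi>\<bar> * \<omega> \<xi>))^2) \<in> borel_measurable lebesgue"
    by measurable
  moreover have "(\<lambda>\<xi>. (cmod v1)^2 * (\<xi>^2 * q \<xi>)) \<in> borel_measurable lebesgue"
    using mq by measurable
  ultimately have "integrable lebesgue (\<lambda>\<xi>. (cmod v1)^2 * (\<xi>^2 * q \<xi>))"
    using integrable_cong_AE[of "\<lambda>\<xi>. (cmod (complex_of_real \<bar>\<xi>\<bar> * \<omega> \<xi>))^2" lebesgue "\<lambda>\<xi>. (cmod v1)^2 * (\<xi>^2 * q \<xi>)"] mw mq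
    by simp
  then have iq2: "integrable lebesgue (\<lambda>\<xi>. \<xi>^2 * q \<xi>)" using v1 by simp
  define h where "h \<xi> = \<xi>^2 * q \<xi> + \<eta> * q \<xi>" for \<xi>
  define k where "k \<xi> = l * q \<xi>" for \<xi>
  have ih: "integrable lebesgue h" unfolding h_def using iq iq2 by simp
  have ik: "integrable lebesgue k" unfolding k_def using iq by simp
  have hpos: "h \<xi> > 0" if "\<xi> \<noteq> 0" for \<xi>
  proof -
    have "mu \<alpha> \<xi> > 0" unfolding mu_def using that by simp
    then have "q \<xi> > 0" unfolding q_def using sl[of \<xi>] by simp
    moreover have "\<xi>^2 + \<eta> > 0" using that eta by (simp add: add_pos_nonneg)
    ultimately show ?thesis unfolding h_def by (simp add: distrib_right[symmetric])
  qed
  have hnn: "h \<xi> \<ge> 0" for \<xi>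
    using hpos[of \<xi>] by (cases "\<xi> = 0") (auto simp: h_def q_def mu_def)
  have Hpos: "integral\<^sup>L lebesgue h > 0"
  proof -
    have "integral\<^sup>L lebesgue h \<ge> 0" using hnn by (simp add: integral_nonneg)
    moreover have "integral\<^sup>L lebesgue h \<noteq> 0"
    proof
      assume "integral\<^sup>L lebesgue h = 0"
      then have "AE \<xi> in lebesgue. h \<xi> = 0"
        using integral_nonneg_eq_0_iff_AE[OF ih] hnn by simp
      then have "AE \<xi> in lebesgue. \<xi> = (0::real)"
        by eventually_elim (use hpos in force)
      then show False using not_AE_zero by simp
    qed
    ultimately show ?thesis by simp
  qed
  have "AE \<xi> in lebesgue. complex_of_real (mu \<alpha> \<xi>) * \<omega> \<xi> = v1 * (of_real (h \<xi>) - \<i> * of_real (k \<xi>))"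
    using aew
  proof eventually_elim
    case (elim \<xi>)
    have sl': "complex_of_real ((s \<xi>)^2 + l^2) \<noteq> 0" 
    proof -
      have "(s \<xi>)^2 + l^2 \<noteq> 0" using sl[of \<xi>] by linarith
      then show ?thesis by (metis of_real_eq_0_iff)
    qed
    have "v1 * (of_real (h \<xi>) - \<i> * of_real (k \<xi>)) * (of_real (s \<xi>) + \<i> * l)
          = v1 * of_real (mu \<alpha> \<xi>) * of_real (mu \<alpha> \<xi>)"
    proof -
      have "h \<xi> = s \<xi> * q \<xi>" by (simp add: h_def s_def distrib_right)
      then have hq: "h \<xi> = s \<xi> * ((mu \<alpha> \<xi>)^2/((s \<xi>)^2 + l^2))" by (simp add: q_def)
      have kq: "k \<xi> = l * ((mu \<alpha> \<xi>)^2/((s \<xi>)^2 + l^2))" by (simp add: k_def q_def)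
      have ne: "(s \<xi>)^2 + l^2 \<noteq> 0" using sl[of \<xi>] by linarith
      show ?thesis unfolding hq kq by (rule cpx_id[OF ne])
    qed
    then show ?case unfolding elim using den[of \<xi>] by (simp add: divide_eq_eq mult.commute mult.left_commute) metis
  qed
  then have "integral\<^sup>L lebesgue (\<lambda>\<xi>. complex_of_real (mu \<alpha> \<xi>) * \<omega> \<xi>)
      = integral\<^sup>L lebesgue (\<lambda>\<xi>. v1 * (of_real (h \<xi>) - \<i> * of_real (k \<xi>)))"
    by (rule integral_cong_AE[rotated 2]) (use mw mq in \<open>auto simp: h_def k_def mu_def\<close>)
  also have "\<dots> = v1 * (of_real (integral\<^sup>L lebesgue h) - \<i> * of_real (integral\<^sup>L lebesgue k))"
    using ih ik by (simp add: integral_diff)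
  finally show ?thesis using Hpos by blast
qed



lemma CS_id:
  fixes C S :: "real \<Rightarrow> complex" and m :: complex
  assumes dS: "\<And>x. x\<in>{0..1} \<Longrightarrow> (S has_vector_derivative C x) (at x within {0..1})"
    and dC: "\<And>x. x\<in>{0..1} \<Longrightarrow> (C has_vector_derivative (- m * S x)) (at x within {0..1})"
    and S0: "S 0 = 0" and C0: "C 0 = 1" and x: "x \<in> {0..1}"
  shows "C x * C x + m * (S x * S x) = 1"
proof -
  have "C x * C x + m * (S x * S x) = C 0 * C 0 + m * (S 0 * S 0)"
  proof (rule const01[OF _ x, of "\<lambda>x. C x * C x + m * (S x * S x)"])
    fix t :: real assume t: "t \<in> {0..1}"
    show "((\<lambda>x. C x * C x + m * (S x * S x)) has_vector_derivative 0) (at t within {0..1})"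
      by (rule vd_eq, rule has_vector_derivative_add[OF has_vector_derivative_mult[OF dC[OF t] dC[OF t]]
            has_vector_derivative_mult_right[OF has_vector_derivative_mult[OF dS[OF t] dS[OF t]]]]) (simp add: algebra_simps)
  qed
  then show ?thesis using S0 C0 by simp
qed

lemma pt_decouple:
  fixes a b l d :: real and U Y :: complex
  assumes a: "a \<noteq> 0" and r: "b*d^2 - l*(a-1)*d - a*b = 0"
  shows "- ((complex_of_real l)^2) * U + \<i> * of_real l * of_real b * Y + \<i> * of_real d * ((- ((complex_of_real l)^2) * Y - \<i> * of_real l * of_real b * U) / of_real a)
        = - of_real (l^2 - d*l*b/a) * (U + \<i> * of_real d * Y)"
proof -
  have "- ((complex_of_real l)^2) * U + \<i> * of_real l * of_real b * Y + \<i> * of_real d * ((- ((complex_of_real l)^2) * Y - \<i> * of_real l * of_real b * U) / of_real a)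
        - (- of_real (l^2 - d*l*b/a) * (U + \<i> * of_real d * Y))
        = - \<i> * of_real (l/a * (b*d^2 - l*(a-1)*d - a*b)) * Y"
    using a by (simp add: field_simps power2_eq_square)
  also have "\<dots> = 0" using r by simp
  finally show ?thesis by simp
qed

lemma branch:
  fixes u ux y yx :: "real \<Rightarrow> complex" and a b l d :: real
  assumes du: "\<And>x. x\<in>{0..1} \<Longrightarrow> (u has_vector_derivative ux x) (at x within {0..1})"
    and dux: "\<And>x. x\<in>{0..1} \<Longrightarrow> (ux has_vector_derivative (- ((complex_of_real l)^2) * u x + \<i> * of_real l * of_real b * y x)) (at x within {0..1})"
    and dy: "\<And>x. x\<in>{0..1} \<Longrightarrow> (y has_vector_derivative yx x) (at x within {0..1})"
    and dyx: "\<And>x. x\<in>{0..1} \<Longrightarrow> (yx has_vector_derivative ((- ((complex_of_real l)^2) * y x - \<i> * of_real l * of_real b * u x) / of_real a)) (at x within {0..1})"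
    and a: "a \<noteq> 0" and r: "b*d^2 - l*(a-1)*d - a*b = 0"
    and u0: "u 0 = 0" and u1: "u 1 = 0" and y0: "y 0 = 0" and y1: "y 1 = 0" and ux1: "ux 1 = 0"
  shows "\<exists>A S1 C1. A * S1 = 0 \<and> A * C1 = \<i> * of_real d * yx 1 \<and>
    C1 * C1 + of_real (l^2 - d*l*b/a) * (S1 * S1) = 1 \<and>
    (S1 = 0 \<longrightarrow> (\<exists>n::int. n \<noteq> 0 \<and> l^2 - d*l*b/a = (real_of_int n * pi)^2)) \<and>
    (A = 0 \<longrightarrow> (\<forall>x\<in>{0..1}. u x + \<i> * of_real d * y x = 0))"
proof -
  define m where "m = l^2 - d*l*b/a"
  define p where "p x = u x + \<i> * of_real d * y x" for x
  define p' where "p' x = ux x + \<i> * of_real d * yx x" for x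
  obtain C S :: "real \<Rightarrow> complex" where dS: "\<And>x. (S has_vector_derivative C x) (at x within {0..1})"
    and dC: "\<And>x. (C has_vector_derivative (- of_real m * S x)) (at x within {0..1})"
    and S0: "S 0 = 0" and C0: "C 0 = 1" and Sz: "S 1 = 0 \<Longrightarrow> \<exists>n::int. n \<noteq> 0 \<and> m = (real_of_int n * pi)^2"
    by (rule CS_exist[of m]) blast
  have dp: "(p has_vector_derivative p' x) (at x within {0..1})" if "x \<in> {0..1}" for x
    unfolding p_def p'_def
    by (rule has_vector_derivative_add[OF du[OF that] has_vector_derivative_mult_right[OF dy[OF that]]])
  have dp': "(p' has_vector_derivative (- of_real m * p x)) (at x within {0..1})" if "x \<in> {0..1}" for x
    unfolding p'_def
    apply (rule vd_eq)
     apply (rule has_vector_derivative_add[OF dux[OF that] has_vector_derivative_mult_right[OF dyx[OF that]]])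
    unfolding p_def m_def by (rule pt_decouple[OF a r])
  have p0: "p 0 = 0" using u0 y0 by (simp add: p_def)
  have sol: "p x = p' 0 * S x \<and> p' x = p' 0 * C x" if "x \<in> {0..1}" for x
    by (rule ode_sol[OF dp dp' dS dC S0 C0 p0 that])
  have id: "C 1 * C 1 + of_real m * (S 1 * S 1) = 1"
    by (rule CS_id[OF dS dC S0 C0]) simp
  have f1: "p' 0 * S 1 = 0" using sol[of 1] u1 y1 by (simp add: p_def)
  have f2: "p' 0 * C 1 = \<i> * of_real d * yx 1" using sol[of 1] ux1 by (simp add: p'_def)
  have f3: "C 1 * C 1 + of_real (l^2 - d*l*b/a) * (S 1 * S 1) = 1" using id by (simp add: m_def)
  have f4: "S 1 = 0 \<longrightarrow> (\<exists>n::int. n \<noteq> 0 \<and> l^2 - d*l*b/a = (real_of_int n * pi)^2)" using Sz by (simp add: m_def)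
  have f5: "p' 0 = 0 \<longrightarrow> (\<forall>x\<in>{0..1}. u x + \<i> * of_real d * y x = 0)"
  proof (intro impI ballI)
    fix x :: real assume z: "p' 0 = 0" and x: "x \<in> {0..1}"
    have "p x = p' 0 * S x" using sol[OF x] by blast
    then show "u x + \<i> * of_real d * y x = 0" using z by (simp add: p_def)
  qed
  show ?thesis using f1 f2 f3 f4 f5 by blast
qed

lemma root_formula:
  fixes a b l r :: real
  assumes b: "b \<noteq> 0" and r: "r^2 = l^2*(a-1)^2 + 4*a*b^2"
  shows "b*((l*(a-1) + r)/(2*b))^2 - l*(a-1)*((l*(a-1) + r)/(2*b)) - a*b = 0"
proof -
  have "b*((l*(a-1) + r)/(2*b))^2 - l*(a-1)*((l*(a-1) + r)/(2*b)) - a*b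
      = (r^2 - (l^2*(a-1)^2 + 4*a*b^2)) / (4*b)"
    using b by (simp add: field_simps power2_eq_square)
  then show ?thesis using r by simp
qed



lemma ode_part:
  fixes u ux y yx :: "real \<Rightarrow> complex" and a b l :: real
  assumes du: "\<And>x. x\<in>{0..1} \<Longrightarrow> (u has_vector_derivative ux x) (at x within {0..1})"
    and dux: "\<And>x. x\<in>{0..1} \<Longrightarrow> (ux has_vector_derivative (- ((complex_of_real l)^2) * u x + \<i> * of_real l * of_real b * y x)) (at x within {0..1})"
    and dy: "\<And>x. x\<in>{0..1} \<Longrightarrow> (y has_vector_derivative yx x) (at x within {0..1})"
    and dyx: "\<And>x. x\<in>{0..1} \<Longrightarrow> (yx has_vector_derivative ((- ((complex_of_real l)^2) * y x - \<i> * of_real l * of_real b * u x) / of_real a)) (at x within {0..1})"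
    and a: "a > 0" and b: "b \<noteq> 0" and l: "l \<noteq> 0"
    and u0: "u 0 = 0" and u1: "u 1 = 0" and y0: "y 0 = 0" and y1: "y 1 = 0" and ux1: "ux 1 = 0"
    and hyp: "\<forall>k1 k2 :: int. (k1, k2) \<noteq> (0, 0) \<longrightarrow>
           b^2 \<noteq> ((real_of_int k1)^2 - a * real_of_int (k2^2)) * (a * (real_of_int k1)^2 - real_of_int (k2^2))
                 / ((a + 1) * real_of_int (k1^2 + k2^2)) * pi^2"
    and x: "x \<in> {0..1}"
  shows "u x = 0 \<and> y x = 0"
proof -
  define D where "D = l^2*(a-1)^2 + 4*a*b^2"
  have Dpos: "D > 0" unfolding D_def using a b by (simp add: add_nonneg_pos)
  define d1 where "d1 = (l*(a-1) + sqrt D)/(2*b)"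
  define d2 where "d2 = (l*(a-1) + (- sqrt D))/(2*b)"
  have r1: "b*d1^2 - l*(a-1)*d1 - a*b = 0"
    unfolding d1_def by (rule root_formula[OF b]) (use Dpos in \<open>simp add: D_def\<close>)
  have r2: "b*d2^2 - l*(a-1)*d2 - a*b = 0"
    unfolding d2_def by (rule root_formula[OF b]) (use Dpos in \<open>simp add: D_def\<close>)
  have sq: "sqrt D > 0" using Dpos by simp
  have d12: "d1 \<noteq> d2"
  proof
    assume "d1 = d2"
    then have "(l*(a-1) + sqrt D) = (l*(a-1) + (- sqrt D))" using b by (simp add: d1_def d2_def)
    then show False using sq by simp
  qed
  have sum: "d1 + d2 = l*(a-1)/b" using b by (simp add: d1_def d2_def field_simps)
  have prod: "d1 * d2 = -a"
  proof -
    have "d1 * d2 = ((l*(a-1))^2 - (sqrt D)^2) / (4*b^2)"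
      using b by (simp add: d1_def d2_def field_simps power2_eq_square)
    also have "\<dots> = -a" using Dpos b by (simp add: D_def field_simps power2_eq_square)
    finally show ?thesis .
  qed
  have a0: "a \<noteq> 0" using a by simp
  obtain A1 S1 C1 where B1: "A1 * S1 = 0" "A1 * C1 = \<i> * of_real d1 * yx 1"
    "C1 * C1 + of_real (l^2 - d1*l*b/a) * (S1 * S1) = 1"
    "S1 = 0 \<longrightarrow> (\<exists>n::int. n \<noteq> 0 \<and> l^2 - d1*l*b/a = (real_of_int n * pi)^2)"
    "A1 = 0 \<longrightarrow> (\<forall>x\<in>{0..1}. u x + \<i> * of_real d1 * y x = 0)"
    using branch[OF du dux dy dyx a0 r1 u0 u1 y0 y1 ux1] by blast
  obtain A2 S2 C2 where B2: "A2 * S2 = 0" "A2 * C2 = \<i> * of_real d2 * yx 1"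
    "C2 * C2 + of_real (l^2 - d2*l*b/a) * (S2 * S2) = 1"
    "S2 = 0 \<longrightarrow> (\<exists>n::int. n \<noteq> 0 \<and> l^2 - d2*l*b/a = (real_of_int n * pi)^2)"
    "A2 = 0 \<longrightarrow> (\<forall>x\<in>{0..1}. u x + \<i> * of_real d2 * y x = 0)"
    using branch[OF du dux dy dyx a0 r2 u0 u1 y0 y1 ux1] by blast
  have A12: "A1 = 0 \<and> A2 = 0"
  proof (cases "yx 1 = 0")
    case True
    have "A1 = A1 * (C1 * C1 + of_real (l^2 - d1*l*b/a) * (S1 * S1))" using B1(3) by simp
    also have "\<dots> = (A1 * C1) * C1 + of_real (l^2 - d1*l*b/a) * ((A1 * S1) * S1)" by (simp add: algebra_simps)
    also have "\<dots> = 0"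
    proof -
      have h: "A1 * C1 = 0" using B1(2) True by simp
      show ?thesis unfolding h B1(1) by simp
    qed
    finally have "A1 = 0" .
    have "A2 = A2 * (C2 * C2 + of_real (l^2 - d2*l*b/a) * (S2 * S2))" using B2(3) by simp
    also have "\<dots> = (A2 * C2) * C2 + of_real (l^2 - d2*l*b/a) * ((A2 * S2) * S2)" by (simp add: algebra_simps)
    also have "\<dots> = 0"
    proof -
      have h: "A2 * C2 = 0" using B2(2) True by simp
      show ?thesis unfolding h B2(1) by simp
    qed
    finally have "A2 = 0" .
    show ?thesis using \<open>A1 = 0\<close> \<open>A2 = 0\<close> by simp
  next
    case False
    have d1z: "d1 \<noteq> 0" and d2z: "d2 \<noteq> 0" using prod a by auto
    have "A1 * C1 \<noteq> 0" using B1(2) False d1z by simp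
    then have "S1 = 0" using B1(1) by auto
    then obtain n1 :: int where n1: "n1 \<noteq> 0" "l^2 - d1*l*b/a = (real_of_int n1 * pi)^2" using B1(4) by blast
    have "A2 * C2 \<noteq> 0" using B2(2) False d2z by simp
    then have "S2 = 0" using B2(1) by auto
    then obtain n2 :: int where n2: "n2 \<noteq> 0" "l^2 - d2*l*b/a = (real_of_int n2 * pi)^2" using B2(4) by blast
    have s: "a * ((l^2 - d1*l*b/a) + (l^2 - d2*l*b/a)) = l^2 * (a + 1)"
    proof -
      have "a * ((l^2 - d1*l*b/a) + (l^2 - d2*l*b/a)) = 2*a*l^2 - (d1 + d2)*l*b"
        using a0 by (simp add: field_simps)
      also have "\<dots> = l^2 * (a + 1)" unfolding sum using b by (simp add: field_simps power2_eq_square)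
      finally show ?thesis .
    qed
    have p: "a * ((l^2 - d1*l*b/a) * (l^2 - d2*l*b/a)) = l^2 * (l^2 - b^2)"
    proof -
      have "a * ((l^2 - d1*l*b/a) * (l^2 - d2*l*b/a)) = a*l^4 - (d1 + d2)*l^3*b + (d1*d2)*l^2*b^2/a"
        using a0 by (simp add: field_simps power2_eq_square power3_eq_cube power4_eq_xxxx)
      also have "\<dots> = l^2 * (l^2 - b^2)" unfolding sum prod using b a0
        by (simp add: field_simps power2_eq_square power3_eq_cube power4_eq_xxxx)
      finally show ?thesis .
    qed
    have "b^2 = ((real_of_int n1^2 - a * real_of_int n2^2) * (a * real_of_int n1^2 - real_of_int n2^2))
             / ((a + 1) * (real_of_int n1^2 + real_of_int n2^2)) * pi^2"
      by (rule degenerate[OF a n1(1) n2(1) n1(2) n2(2) s p])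
    moreover have "(n1, n2) \<noteq> (0, 0)" using n1 by simp
    ultimately show ?thesis using hyp by auto
  qed
  have e1: "u x + \<i> * of_real d1 * y x = 0" using B1(5) A12 x by blast
  have e2: "u x + \<i> * of_real d2 * y x = 0" using B2(5) A12 x by blast
  have "\<i> * of_real (d1 - d2) * y x = (u x + \<i> * of_real d1 * y x) - (u x + \<i> * of_real d2 * y x)"
    by (simp add: algebra_simps)
  then have "\<i> * of_real (d1 - d2) * y x = 0" using e1 e2 by simp
  then have "y x = 0" using d12 by simp
  then show ?thesis using e1 by simp
qed



lemma pt1:
  fixes l b :: real and U V Y Z W :: complex
  assumes h1: "V = \<i> * of_real l * U" and h2: "W - of_real b * Z = \<i> * of_real l * V" and h3: "Z = \<i> * of_real l * Y"
  shows "W = - ((complex_of_real l)^2) * U + \<i> * of_real l * of_real b * Y"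
proof -
  have "W = \<i> * of_real l * V + of_real b * Z" using h2 by (simp add: algebra_simps)
  then show ?thesis unfolding h1 h3 by (simp add: algebra_simps power2_eq_square)
qed

lemma pt2:
  fixes l a b :: real and U V Y Z Q :: complex
  assumes h1: "V = \<i> * of_real l * U" and h2: "of_real a * Q + of_real b * V = \<i> * of_real l * Z"
    and h3: "Z = \<i> * of_real l * Y" and a: "a \<noteq> 0"
  shows "Q = (- ((complex_of_real l)^2) * Y - \<i> * of_real l * of_real b * U) / of_real a"
proof -
  have "of_real a * Q = \<i> * of_real l * Z - of_real b * V" using h2 by (simp add: algebra_simps)
  also have "\<dots> = - ((complex_of_real l)^2) * Y - \<i> * of_real l * of_real b * U"
    unfolding h1 h3 by (simp add: algebra_simps power2_eq_square)
  finally show ?thesis using a by (simp add: eq_divide_eq mult.commute)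
qed

lemma contra_alg:
  fixes c l H K :: real and V X U :: complex
  assumes c: "c \<noteq> 0" and l: "l \<noteq> 0" and H: "H \<noteq> 0" and V: "V \<noteq> 0"
    and X: "X = - of_real c * (V * (of_real H - \<i> * of_real K))"
    and U: "V = \<i> * of_real l * U"
    and en: "X * cnj U = cnj X * U"
  shows False
proof -
  define N where "N = U * cnj U"
  have e1: "X * cnj U = - (of_real c * \<i> * of_real l * N) * (of_real H - \<i> * of_real K)"
    unfolding X U N_def by (simp add: mult_ac)
  have e2: "cnj X * U = (of_real c * \<i> * of_real l * N) * (of_real H + \<i> * of_real K)"
    unfolding X U N_def by (simp add: mult_ac)
  have "(of_real c * \<i> * of_real l * N) * ((of_real H - \<i> * of_real K) + (of_real H + \<i> * of_real K)) = 0"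
    using en unfolding e1 e2 by (simp add: algebra_simps)
  then have "(of_real c * \<i> * of_real l * N) * (2 * of_real H) = 0" by simp
  then have "N = 0" using c l H by simp
  then have "U = 0" unfolding N_def by simp
  then show False using U V by simp
qed


theorem lemma2p5:
  fixes \<alpha> \<eta> \<gamma> a b lam :: real
    and u ux uxx v vx y yx yxx z zx \<omega> :: "real \<Rightarrow> complex"
  assumes "0 < \<alpha>" "\<alpha> < 1" "\<eta> \<ge> 0" "\<gamma> > 0" "a > 0" "b \<noteq> 0"
    and "\<forall>k1 k2 :: int. (k1, k2) \<noteq> (0, 0) \<longrightarrow>
           b^2 \<noteq> ((k1^2 - a * k2^2) * (a * k1^2 - k2^2)) / ((a + 1) * (k1^2 + k2^2)) * pi^2"
    and "in_DA \<alpha> \<eta> \<gamma> u ux uxx v vx y yx yxx z zx \<omega>"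
    and "AE x in lebesgue. x \<in> {0<..<1} \<longrightarrow> v x = \<i> * lam * u x"
    and "AE x in lebesgue. x \<in> {0<..<1} \<longrightarrow> uxx x - b * z x = \<i> * lam * v x"
    and "AE x in lebesgue. x \<in> {0<..<1} \<longrightarrow> z x = \<i> * lam * y x"
    and "AE x in lebesgue. x \<in> {0<..<1} \<longrightarrow> a * yxx x + b * v x = \<i> * lam * z x"
    and "AE \<xi> in lebesgue. - complex_of_real (\<xi>^2 + \<eta>) * \<omega> \<xi> + v 1 * complex_of_real (mu \<alpha> \<xi>)
                           = \<i> * lam * \<omega> \<xi>"
  shows "(AE x in lebesgue. x \<in> {0<..<1} \<longrightarrow> u x = 0 \<and> v x = 0 \<and> y x = 0 \<and> z x = 0)
         \<and> (AE \<xi> in lebesgue. \<omega> \<xi> = 0)"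
proof -
  have a0: "a \<noteq> 0" using assms(5) by simp
  have hyp: "\<forall>k1 k2 :: int. (k1, k2) \<noteq> (0, 0) \<longrightarrow>
           b^2 \<noteq> ((real_of_int k1)^2 - a * real_of_int (k2^2)) * (a * (real_of_int k1)^2 - real_of_int (k2^2))
                 / ((a + 1) * real_of_int (k1^2 + k2^2)) * pi^2"
    using assms(7) by simp
  have wu: "weak_deriv01 u ux" and wux: "weak_deriv01 ux uxx" and u0: "u 0 = 0"
    and wy: "weak_deriv01 y yx" and wyx: "weak_deriv01 yx yxx" and y0: "y 0 = 0" and y1: "y 1 = 0"
    and wv: "weak_deriv01 v vx" and Lw: "L2_on UNIV \<omega>"
    and Lxw: "L2_on UNIV (\<lambda>\<xi>. complex_of_real \<bar>\<xi>\<bar> * \<omega> \<xi>)"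
    and bc: "ux 1 + complex_of_real (\<gamma> * kappa \<alpha>) *
        integral\<^sup>L lebesgue (\<lambda>\<xi>. complex_of_real (mu \<alpha> \<xi>) * \<omega> \<xi>) = 0"
    using assms(8) unfolding in_DA_def by blast+
  have cu: "continuous_on {0..1} u" by (rule wd_cont[OF wu])
  have cux: "continuous_on {0..1} ux" by (rule wd_cont[OF wux])
  have cy: "continuous_on {0..1} y" by (rule wd_cont[OF wy])
  have cyx: "continuous_on {0..1} yx" by (rule wd_cont[OF wyx])
  have cv: "continuous_on {0..1} v" by (rule wd_cont[OF wv])
  have Auxx: "AE x in lebesgue. x \<in> {0<..<1} \<longrightarrow>
      uxx x = - ((complex_of_real lam)^2) * u x + \<i> * of_real lam * of_real b * y x"
    using assms(9) assms(10) assms(11)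
  proof eventually_elim
    case (elim x)
    show ?case
    proof
      assume x: "x \<in> {0<..<1}"
      show "uxx x = - ((complex_of_real lam)^2) * u x + \<i> * of_real lam * of_real b * y x"
        by (rule pt1[OF elim(1)[rule_format, OF x] elim(2)[rule_format, OF x] elim(3)[rule_format, OF x]])
    qed
  qed
  have Ayxx: "AE x in lebesgue. x \<in> {0<..<1} \<longrightarrow>
      yxx x = (- ((complex_of_real lam)^2) * y x - \<i> * of_real lam * of_real b * u x) / of_real a"
    using assms(9) assms(12) assms(11)
  proof eventually_elim
    case (elim x)
    show ?case
    proof
      assume x: "x \<in> {0<..<1}"
      show "yxx x = (- ((complex_of_real lam)^2) * y x - \<i> * of_real lam * of_real b * u x) / of_real a"
        by (rule pt2[OF elim(1)[rule_format, OF x] elim(2)[rule_format, OF x] elim(3)[rule_format, OF x] a0])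
    qed
  qed
  have c1: "continuous_on {0..1} (\<lambda>x. - ((complex_of_real lam)^2) * u x + \<i> * of_real lam * of_real b * y x)"
    by (intro continuous_intros cu cy)
  have c2: "continuous_on {0..1} (\<lambda>x. (- ((complex_of_real lam)^2) * y x - \<i> * of_real lam * of_real b * u x) / of_real a)"
    by (intro continuous_intros cu cy) (simp add: a0)
  have du: "(u has_vector_derivative ux x) (at x within {0..1})" if "x \<in> {0..1}" for x
    by (rule wd_deriv[OF wu cux _ that]) simp
  have dy: "(y has_vector_derivative yx x) (at x within {0..1})" if "x \<in> {0..1}" for x
    by (rule wd_deriv[OF wy cyx _ that]) simp
  have dux: "(ux has_vector_derivative (- ((complex_of_real lam)^2) * u x + \<i> * of_real lam * of_real b * y x)) (at x within {0..1})"
    if "x \<in> {0..1}" for x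
    using wd_deriv[OF wux c1 Auxx that] by simp
  have dyx: "(yx has_vector_derivative ((- ((complex_of_real lam)^2) * y x - \<i> * of_real lam * of_real b * u x) / of_real a)) (at x within {0..1})"
    if "x \<in> {0..1}" for x
    using wd_deriv[OF wyx c2 Ayxx that] by simp
  have v1eq: "v 1 = \<i> * of_real lam * u 1"
  proof -
    have "(\<lambda>x. v x - \<i> * of_real lam * u x) 1 = 0"
    proof (rule ae_cont_eq)
      show "continuous_on {0..1} (\<lambda>x. v x - \<i> * of_real lam * u x)"
        by (intro continuous_intros cu cv)
      show "AE x in lebesgue. x \<in> {0<..<1} \<longrightarrow> v x - \<i> * of_real lam * u x = 0"
        using assms(9) by eventually_elim simp
    qed simp
    then show ?thesis by simp
  qed
  have kap: "kappa \<alpha> > 0"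
    unfolding kappa_def using assms(1,2) by (intro divide_pos_pos sin_gt_zero) auto
  have gk: "\<gamma> * kappa \<alpha> \<noteq> 0" using kap assms(4) by simp
  have v1z: "v 1 = 0"
  proof (cases "lam = 0")
    case True
    then show ?thesis using v1eq by simp
  next
    case False
    show ?thesis
    proof (rule ccontr)
      assume nz: "v 1 \<noteq> 0"
      obtain H K where HK: "H > 0"
        "integral\<^sup>L lebesgue (\<lambda>\<xi>. complex_of_real (mu \<alpha> \<xi>) * \<omega> \<xi>) = v 1 * (of_real H - \<i> * of_real K)"
        using omega_part[OF False nz assms(3) Lw Lxw assms(13)] by blast
      have en: "ux 1 * cnj (u 1) = cnj (ux 1) * u 1"
        by (rule energy[OF du dux dy dyx a0 u0 y0 y1])
      have "ux 1 = - (complex_of_real (\<gamma> * kappa \<alpha>) *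
          integral\<^sup>L lebesgue (\<lambda>\<xi>. complex_of_real (mu \<alpha> \<xi>) * \<omega> \<xi>))"
        using bc by (simp add: eq_neg_iff_add_eq_0)
      then have X: "ux 1 = - of_real (\<gamma> * kappa \<alpha>) * (v 1 * (of_real H - \<i> * of_real K))"
        unfolding HK(2) by simp
      show False
        by (rule contra_alg[OF gk False _ nz X v1eq en]) (use HK(1) in simp)
    qed
  qed
  have wz: "AE \<xi> in lebesgue. \<omega> \<xi> = 0"
    using assms(13) AE_nonzero
  proof eventually_elim
    case (elim \<xi>)
    from elim(1) have "- complex_of_real (\<xi>^2 + \<eta>) * \<omega> \<xi> + v 1 * complex_of_real (mu \<alpha> \<xi>) = \<i> * complex_of_real lam * \<omega> \<xi>" .
    then have "- complex_of_real (\<xi>^2 + \<eta>) * \<omega> \<xi> = \<i> * complex_of_real lam * \<omega> \<xi>"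
      unfolding v1z by (simp only: mult_zero_left add_0_right)
    then have "(complex_of_real (\<xi>^2 + \<eta>) + \<i> * of_real lam) * \<omega> \<xi> = 0"
      by (metis distrib_right minus_mult_left neg_eq_iff_add_eq_0)
    moreover have "complex_of_real (\<xi>^2 + \<eta>) + \<i> * of_real lam \<noteq> 0"
    proof
      assume "complex_of_real (\<xi>^2 + \<eta>) + \<i> * of_real lam = 0"
      then have "Re (complex_of_real (\<xi>^2 + \<eta>) + \<i> * of_real lam) = 0" by simp
      then have "\<xi>^2 + \<eta> = 0" by simp
      moreover have "\<xi>^2 > 0" using elim(2) by simp
      ultimately show False using assms(3) by simp
    qed
    ultimately show ?case by simp
  qed
  have I0: "integral\<^sup>L lebesgue (\<lambda>\<xi>. complex_of_real (mu \<alpha> \<xi>) * \<omega> \<xi>) = 0"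
    by (rule integral_eq_zero_AE) (use wz in eventually_elim, simp)
  have ux1: "ux 1 = 0" using bc I0 by simp
  have sol: "u x = 0 \<and> y x = 0" if x: "x \<in> {0..1}" for x
  proof (cases "lam = 0")
    case True
    obtain C S :: "real \<Rightarrow> complex" where dS: "\<And>x. (S has_vector_derivative C x) (at x within {0..1})"
      and dC: "\<And>x. (C has_vector_derivative (- of_real 0 * S x)) (at x within {0..1})"
      and S0: "S 0 = 0" and C0: "C 0 = 1" and Sz: "S 1 = 0 \<Longrightarrow> \<exists>n::int. n \<noteq> 0 \<and> (0::real) = (real_of_int n * pi)^2"
      by (rule CS_exist[of 0]) blast
    have dux0: "(ux has_vector_derivative (- of_real 0 * u t)) (at t within {0..1})" if "t \<in> {0..1}" for t
      using dux[OF that] True by simp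
    have dyx0: "(yx has_vector_derivative (- of_real 0 * y t)) (at t within {0..1})" if "t \<in> {0..1}" for t
      using dyx[OF that] True by simp
    have sU: "u t = ux 0 * S t \<and> ux t = ux 0 * C t" if "t \<in> {0..1}" for t
      by (rule ode_sol[OF du dux0 dS dC S0 C0 u0 that])
    have sY: "y t = yx 0 * S t \<and> yx t = yx 0 * C t" if "t \<in> {0..1}" for t
      by (rule ode_sol[OF dy dyx0 dS dC S0 C0 y0 that])
    have "C 1 * C 1 + of_real 0 * (S 1 * S 1) = 1" by (rule CS_id[OF dS dC S0 C0]) simp
    then have C1: "C 1 \<noteq> 0" by auto
    have S1: "S 1 \<noteq> 0"
    proof
      assume "S 1 = 0"
      then obtain n :: int where "n \<noteq> 0" "(0::real) = (real_of_int n * pi)^2" using Sz by blast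
      then show False by simp
    qed
    have "ux 0 * C 1 = 0" using sU[of 1] ux1 by simp
    then have ux0: "ux 0 = 0" using C1 by simp
    have "yx 0 * S 1 = 0" using sY[of 1] y1 by simp
    then have yx0: "yx 0 = 0" using S1 by simp
    show ?thesis using sU[OF x] sY[OF x] ux0 yx0 by simp
  next
    case False
    have u1: "u 1 = 0" using v1eq v1z False by simp
    show ?thesis
      by (rule ode_part[OF du dux dy dyx assms(5) assms(6) False u0 u1 y0 y1 ux1 hyp x])
  qed
  show ?thesis
  proof
    show "AE x in lebesgue. x \<in> {0<..<1} \<longrightarrow> u x = 0 \<and> v x = 0 \<and> y x = 0 \<and> z x = 0"
      using assms(9) assms(11)
    proof eventually_elim
      case (elim x)
      show ?case
      proof
        assume x: "x \<in> {0<..<1}"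
        then have "x \<in> {0..1}" by simp
        then have "u x = 0" "y x = 0" using sol by auto
        then show "u x = 0 \<and> v x = 0 \<and> y x = 0 \<and> z x = 0"
          using elim(1)[rule_format, OF x] elim(2)[rule_format, OF x] by simp
      qed
    qed
    show "AE \<xi> in lebesgue. \<omega> \<xi> = 0" by (rule wz)
  qed
qed

end
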